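(* Let $n>s\ge1$ be integers, $t_0,\dots,t_s$ independent indeterminates, $g(x)=\sum_{k=0}^st_kx^k$, $B=(b_{ij})_{1\le i,j\le s}=M_s(g,g')$, and let $\bar B=(\bar b_{ij})_{1\le i,j\le s}$ with $$\bar b_{ij}=b_{ij}-\frac{(s-i+1)(s-j+1)}{n}\,t_{s-i+1}t_{s-j+1}.$$ Write the characteristic polynomial of $\bar B$ as $\det(xI_s-\bar B)=\sum_{k=0}^sh_{s-k}(t_0,\dots,t_s)x^{s-k}$. Then for every $k$ with $1\le k\le s$, $h_{s-k}(t_0,\dots,t_s)$ is a nonzero polynomial in $\mathbb{R}[t_0,\dots,t_s]$.
   Context: Bezoutian: for polynomials $f_1,f_2$ over a field $F$ of characteristic $0$ and an integer $n\ge\max\{\deg f_1,\deg f_2\}$, write $\frac{f_1(x)f_2(y)-f_1(y)f_2(x)}{x-y}=\sum_{i,j=1}^n\alpha_{ij}x^{n-i}y^{n-j}\in F[x,y]$ and set $M_n(f_1,f_2)=(\alpha_{ij})_{1\le i,j\le n}$; here $F=\mathbb{R}(t_0,\dots,t_s)$. *)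

theory Defs
  imports "HOL-Library.Poly_Mapping" "HOL-Computational_Algebra.Polynomial"
    "Jordan_Normal_Form.Char_Poly"
begin

text \<open>The polynomial ring R[t_0,...,t_s]: finitely supported maps from
  exponent vectors (nat =>0 nat) to real coefficients.\<close>
type_synonym mpoly = "(nat \<Rightarrow>\<^sub>0 nat) \<Rightarrow>\<^sub>0 real"

definition Var :: "nat \<Rightarrow> mpoly" where
  "Var k = Poly_Mapping.single (Poly_Mapping.single k 1) 1"

definition Const :: "real \<Rightarrow> mpoly" where
  "Const c = Poly_Mapping.single 0 c"

text \<open>Bivariate polynomials in x,y: outer variable x, inner variable y.
  The polynomial f1(x)f2(y) - f1(y)f2(x), and x - y.\<close>
definition bez_numer :: "'a::comm_ring_1 poly \<Rightarrow> 'a poly \<Rightarrow> 'a poly poly" where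
  "bez_numer f1 f2 =
     map_poly (\<lambda>c. [:c:]) f1 * [:f2:] - [:f1:] * map_poly (\<lambda>c. [:c:]) f2"

definition x_minus_y :: "'a::comm_ring_1 poly poly" where
  "x_minus_y = [: -[:0, 1:], 1 :]"

definition bez_quot :: "'a::comm_ring_1 poly \<Rightarrow> 'a poly \<Rightarrow> 'a poly poly" where
  "bez_quot f1 f2 = (THE q. q * x_minus_y = bez_numer f1 f2)"

text \<open>Bezoutian M_n(f1,f2) = (alpha_ij)_{1<=i,j<=n}, where alpha_ij is the
  coefficient of x^(n-i) y^(n-j); stored 0-based: entry (i,j) is alpha_(i+1)(j+1).\<close>
definition bezoutian :: "nat \<Rightarrow> 'a::comm_ring_1 poly \<Rightarrow> 'a poly \<Rightarrow> 'a mat" where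
  "bezoutian n f1 f2 =
     mat n n (\<lambda>(i, j). coeff (coeff (bez_quot f1 f2) (n - (i + 1))) (n - (j + 1)))"

definition gen_poly :: "nat \<Rightarrow> mpoly poly" where
  "gen_poly s = (\<Sum>k\<le>s. monom (Var k) k)"

text \<open>B-bar, 0-based: entry (i,j) is bbar_(i+1)(j+1) =
  b_(i+1)(j+1) - (s-i)(s-j)/n * t_(s-i) t_(s-j).\<close>
definition Bbar :: "nat \<Rightarrow> nat \<Rightarrow> mpoly mat" where
  "Bbar n s = mat s s (\<lambda>(i, j).
     bezoutian s (gen_poly s) (pderiv (gen_poly s)) $$ (i, j)
     - Const (real (s - i) * real (s - j) / real n) * Var (s - i) * Var (s - j))"

end

theory Submission
  imports Defs
begin


definition mono_ev :: "(nat \<Rightarrow> real) \<Rightarrow> (nat \<Rightarrow>\<^sub>0 nat) \<Rightarrow> real" where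
  "mono_ev pt m = (\<Prod>i\<in>Poly_Mapping.keys m. pt i ^ Poly_Mapping.lookup m i)"

definition ev :: "(nat \<Rightarrow> real) \<Rightarrow> mpoly \<Rightarrow> real" where
  "ev pt p = (\<Sum>m\<in>Poly_Mapping.keys p. Poly_Mapping.lookup p m * mono_ev pt m)"

lemma mono_ev_superset:
  assumes "finite S" "Poly_Mapping.keys m \<subseteq> S"
  shows "mono_ev pt m = (\<Prod>i\<in>S. pt i ^ Poly_Mapping.lookup m i)"
  unfolding mono_ev_def
  by (rule prod.mono_neutral_left) (use assms in \<open>auto simp: in_keys_iff\<close>)

lemma mono_ev_add: "mono_ev pt (a + b) = mono_ev pt a * mono_ev pt b"
proof -
  let ?S = "Poly_Mapping.keys a \<union> Poly_Mapping.keys b"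
  have f: "finite ?S" by simp
  have "mono_ev pt (a + b) = (\<Prod>i\<in>?S. pt i ^ Poly_Mapping.lookup (a+b) i)"
    by (intro mono_ev_superset[OF f] keys_add)
  also have "\<dots> = (\<Prod>i\<in>?S. pt i ^ Poly_Mapping.lookup a i * pt i ^ Poly_Mapping.lookup b i)"
    by (simp add: lookup_add power_add)
  also have "\<dots> = (\<Prod>i\<in>?S. pt i ^ Poly_Mapping.lookup a i) * (\<Prod>i\<in>?S. pt i ^ Poly_Mapping.lookup b i)"
    by (rule prod.distrib)
  also have "\<dots> = mono_ev pt a * mono_ev pt b"
    by (subst (1 2) mono_ev_superset[OF f]) auto
  finally show ?thesis .
qed

lemma mono_ev_zero[simp]: "mono_ev pt 0 = 1"
  by (simp add: mono_ev_def)

lemma ev_superset: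
  assumes "finite S" "Poly_Mapping.keys p \<subseteq> S"
  shows "ev pt p = (\<Sum>m\<in>S. Poly_Mapping.lookup p m * mono_ev pt m)"
  unfolding ev_def
  by (rule sum.mono_neutral_left) (use assms in \<open>auto simp: in_keys_iff\<close>)

lemma ev_add: "ev pt (p + q) = ev pt p + ev pt q"
proof -
  let ?S = "Poly_Mapping.keys p \<union> Poly_Mapping.keys q"
  have f: "finite ?S" by simp
  have "ev pt (p + q) = (\<Sum>m\<in>?S. Poly_Mapping.lookup (p+q) m * mono_ev pt m)"
    by (intro ev_superset[OF f] keys_add)
  also have "\<dots> = (\<Sum>m\<in>?S. Poly_Mapping.lookup p m * mono_ev pt m) + (\<Sum>m\<in>?S. Poly_Mapping.lookup q m * mono_ev pt m)"
    unfolding lookup_add distrib_right by (rule sum.distrib)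
  also have "\<dots> = ev pt p + ev pt q"
    by (subst (1 2) ev_superset[OF f]) auto
  finally show ?thesis .
qed

lemma ev_zero[simp]: "ev pt 0 = 0" by (simp add: ev_def)

lemma ev_sum: "ev pt (sum f A) = (\<Sum>a\<in>A. ev pt (f a))"
  by (induction A rule: infinite_finite_induct) (auto simp: ev_add)

lemma ev_single[simp]: "ev pt (Poly_Mapping.single m c) = c * mono_ev pt m"
  by (cases "c = 0") (auto simp: ev_def)

lemma pm_as_sum: "p = (\<Sum>m\<in>Poly_Mapping.keys p. Poly_Mapping.single m (Poly_Mapping.lookup p m))"
proof (rule poly_mapping_eqI)
  fix k
  have "Poly_Mapping.lookup (\<Sum>m\<in>Poly_Mapping.keys p. Poly_Mapping.single m (Poly_Mapping.lookup p m)) k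
     = (\<Sum>m\<in>Poly_Mapping.keys p. (Poly_Mapping.lookup p m when m = k))"
    by (simp add: lookup_sum lookup_single)
  also have "\<dots> = (\<Sum>m\<in>Poly_Mapping.keys p. (if m = k then Poly_Mapping.lookup p k else 0))"
    by (rule sum.cong) (auto simp: when_def)
  also have "\<dots> = Poly_Mapping.lookup p k"
    by (simp add: in_keys_iff)
  finally show "Poly_Mapping.lookup p k = Poly_Mapping.lookup (\<Sum>m\<in>Poly_Mapping.keys p. Poly_Mapping.single m (Poly_Mapping.lookup p m)) k" by simp
qed

lemma ev_mult: "ev pt (p * q) = ev pt p * ev pt q"
proof -
  have "p * q = (\<Sum>m\<in>Poly_Mapping.keys p. Poly_Mapping.single m (Poly_Mapping.lookup p m)) *
     (\<Sum>m'\<in>Poly_Mapping.keys q. Poly_Mapping.single m' (Poly_Mapping.lookup q m'))"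
    using pm_as_sum[of p] pm_as_sum[of q] by simp
  also have "\<dots> = (\<Sum>m\<in>Poly_Mapping.keys p. \<Sum>m'\<in>Poly_Mapping.keys q.
       Poly_Mapping.single (m + m') (Poly_Mapping.lookup p m * Poly_Mapping.lookup q m'))"
    by (simp only: sum_product mult_single)
  finally have "ev pt (p * q) = (\<Sum>m\<in>Poly_Mapping.keys p. \<Sum>m'\<in>Poly_Mapping.keys q.
       Poly_Mapping.lookup p m * Poly_Mapping.lookup q m' * (mono_ev pt m * mono_ev pt m'))"
    by (simp only: ev_sum ev_single mono_ev_add)
  also have "\<dots> = ev pt p * ev pt q"
    unfolding ev_def sum_product by (simp add: mult_ac)
  finally show ?thesis .
qed

lemma ev_one: "ev pt 1 = 1"
  using ev_single[of pt 0 1] by simp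

lemma ev_hom: "idom_hom (ev pt)"
  by unfold_locales (auto simp: ev_add ev_mult ev_one)

lemma ev_Var[simp]: "ev pt (Var k) = pt k"
  by (simp add: Var_def mono_ev_def)

lemma ev_Const[simp]: "ev pt (Const c) = c"
  by (simp add: Const_def)



lemma xmy_cancel:
  fixes q1 q2 :: "'a::comm_ring_1 poly poly"
  assumes "q1 * x_minus_y = q2 * x_minus_y"
  shows "q1 = q2"
proof (rule ccontr)
  assume ne: "q1 \<noteq> q2"
  define d where "d = q1 - q2"
  have d0: "d \<noteq> 0" using ne by (simp add: d_def)
  have "d * x_minus_y = 0" using assms by (simp add: d_def left_diff_distrib)
  moreover have dx: "degree (x_minus_y :: 'a poly poly) = 1" "coeff (x_minus_y :: 'a poly poly) 1 = 1"
    by (auto simp: x_minus_y_def)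
  have "coeff (d * x_minus_y) (degree d + degree (x_minus_y :: 'a poly poly)) = coeff d (degree d) * coeff (x_minus_y :: 'a poly poly) (degree (x_minus_y :: 'a poly poly))"
    by (rule coeff_mult_degree_sum)
  hence "coeff (d * x_minus_y) (degree d + 1) = lead_coeff d" using dx by simp
  ultimately have "lead_coeff d = 0" by simp
  with d0 show False by simp
qed

lemma poly_C_y: "poly (map_poly (\<lambda>c. [:c:]) p) [:0, 1:] = (p :: 'a::comm_ring_1 poly)"
proof (induction p)
  case 0 then show ?case by simp
next
  case (pCons a p)
  have "map_poly (\<lambda>c. [:c:]) (pCons a p) = pCons [:a:] (map_poly (\<lambda>c. [:c:]) p)"
    by (rule poly_eqI) (simp add: coeff_map_poly coeff_pCons split: nat.split)
  then have "poly (map_poly (\<lambda>c. [:c:]) (pCons a p)) [:0, 1:] = [:a:] + [:0,1:] * p"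
    unfolding poly_pCons pCons.IH by (simp only: poly_pCons pCons.IH)
  also have "\<dots> = pCons a p" by simp
  finally show ?case .
qed

lemma bez_quot_correct:
  fixes f1 f2 :: "'a::comm_ring_1 poly"
  shows "bez_quot f1 f2 * x_minus_y = bez_numer f1 f2"
proof -
  let ?N = "bez_numer f1 f2"
  let ?c = "[:0, 1:] :: 'a poly"
  have pN: "poly ?N ?c = 0"
    by (simp add: bez_numer_def poly_C_y mult.commute)
  have "[:-?c, 1:] * synthetic_div ?N ?c + [:poly ?N ?c:] = ?N"
    by (rule synthetic_div_correct')
  hence ex: "synthetic_div ?N ?c * x_minus_y = ?N"
    using pN by (simp add: x_minus_y_def mult.commute)
  have "\<exists>!q. q * x_minus_y = ?N"
    using ex xmy_cancel by metis
  then show ?thesis unfolding bez_quot_def by (rule theI')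
qed

lemma bez_quot_unique:
  fixes f1 f2 :: "'a::comm_ring_1 poly"
  assumes "q * x_minus_y = bez_numer f1 f2"
  shows "bez_quot f1 f2 = q"
  using xmy_cancel[of "bez_quot f1 f2" q] bez_quot_correct[of f1 f2] assms by simp

lemma const_hom: "comm_ring_hom (\<lambda>x::'a::comm_ring_1. [:x:])"
  by unfold_locales (auto simp: add_pCons[symmetric])

lemma bez_quot_map:
  assumes h: "comm_ring_hom h"
  shows "map_poly (map_poly h) (bez_quot f1 f2) = bez_quot (map_poly h f1) (map_poly h f2)"
proof -
  interpret comm_ring_hom h by (rule h)
  interpret mh: map_poly_comm_ring_hom h ..
  interpret mmh: map_poly_comm_ring_hom "map_poly h" ..
  have C: "map_poly (map_poly h) (map_poly (\<lambda>c. [:c:]) f) = map_poly (\<lambda>c. [:c:]) (map_poly h f)" for f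
    by (rule poly_eqI) (simp add: coeff_map_poly map_poly_pCons_hom)
  have K: "map_poly (map_poly h) [:f:] = [:map_poly h f:]" for f
    by (rule poly_eqI) (simp add: coeff_map_poly coeff_pCons split: nat.split)
  have X: "map_poly (map_poly h) x_minus_y = x_minus_y"
    by (simp add: x_minus_y_def hom_uminus)
  have "map_poly (map_poly h) (bez_quot f1 f2) * x_minus_y
        = map_poly (map_poly h) (bez_quot f1 f2 * x_minus_y)"
    by (simp add: mmh.hom_mult X)
  also have "\<dots> = map_poly (map_poly h) (bez_numer f1 f2)"
    by (simp add: bez_quot_correct)
  also have "\<dots> = bez_numer (map_poly h f1) (map_poly h f2)"
    unfolding bez_numer_def mmh.hom_minus mmh.hom_mult C K ..
  finally show ?thesis by (intro bez_quot_unique[symmetric])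
qed



definition lin :: "nat \<Rightarrow> real poly" where "lin k = [:-real k, 1:]"
definition gR :: "nat \<Rightarrow> real poly" where "gR s = (\<Prod>k<s. lin k)"
definition qk :: "nat \<Rightarrow> nat \<Rightarrow> real poly" where "qk s k = (\<Prod>j\<in>{..<s}-{k}. lin j)"
abbreviation Cx :: "real poly \<Rightarrow> real poly poly" where "Cx \<equiv> map_poly (\<lambda>c. [:c:])"
definition Qs :: "nat \<Rightarrow> real poly poly" where
  "Qs s = (\<Sum>k<s. Cx (qk s k) * [:qk s k:])"

lemma gR_split: "k < s \<Longrightarrow> gR s = lin k * qk s k"
  unfolding gR_def qk_def by (rule prod.remove) auto

lemma pderiv_lin: "pderiv (lin k) = 1"
  by (simp add: lin_def pderiv_pCons)

lemma pderiv_gR: "pderiv (gR s) = (\<Sum>k<s. qk s k)"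
  unfolding gR_def qk_def pderiv_prod pderiv_lin by simp

lemma Cx_lin: "Cx (lin k) - [:lin k:] = x_minus_y"
  by (rule poly_eqI)
     (simp add: lin_def x_minus_y_def coeff_map_poly coeff_pCons split: nat.split)

lemma ring_aux: "A*B*Y - X*Y*B = (A - X)*(B*(Y::'a::comm_ring))"
  by (simp add: algebra_simps)

lemma Qs_correct: "Qs s * x_minus_y = bez_numer (gR s) (pderiv (gR s))"
proof -
  interpret Ch: map_poly_comm_ring_hom "\<lambda>c::real. [:c:]"
    using const_hom by (simp add: map_poly_comm_ring_hom_def)
  interpret Kh: comm_ring_hom "\<lambda>x::real poly. [:x:]" by (rule const_hom)
  have tm: "Cx (gR s) * [:qk s k:] - [:gR s:] * Cx (qk s k) = Cx (qk s k) * [:qk s k:] * x_minus_y"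
    if "k < s" for k
  proof -
    have "Cx (gR s) * [:qk s k:] - [:gR s:] * Cx (qk s k)
       = (Cx (lin k) - [:lin k:]) * (Cx (qk s k) * [:qk s k:])"
      unfolding gR_split[OF that] Ch.hom_mult Kh.hom_mult by (rule ring_aux)
    then show ?thesis unfolding Cx_lin by (simp add: mult_ac)
  qed
  have "bez_numer (gR s) (pderiv (gR s)) = (\<Sum>k<s. Cx (gR s) * [:qk s k:] - [:gR s:] * Cx (qk s k))"
    unfolding bez_numer_def pderiv_gR Ch.hom_sum Kh.hom_sum sum_distrib_left sum_subtractf ..
  also have "\<dots> = (\<Sum>k<s. Cx (qk s k) * [:qk s k:] * x_minus_y)"
    by (rule sum.cong[OF refl], rule tm) simp
  also have "\<dots> = Qs s * x_minus_y"
    unfolding Qs_def sum_distrib_right ..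
  finally show ?thesis ..
qed

lemma bez_quot_gR: "bez_quot (gR s) (pderiv (gR s)) = Qs s"
  by (rule bez_quot_unique) (rule Qs_correct)

lemma coeff_Qs: "coeff (coeff (Qs s) a) b = (\<Sum>k<s. coeff (qk s k) a * coeff (qk s k) b)"
proof -
  have "coeff (coeff (Cx p * [:r:]) a) b = coeff p a * coeff r b" for p r :: "real poly"
  proof -
    have "Cx p * [:r:] = Polynomial.smult r (Cx p)" by simp
    thus ?thesis by (simp add: coeff_map_poly coeff_pCons mult.commute split: nat.split)
  qed
  thus ?thesis unfolding Qs_def coeff_sum by simp
qed



definition pt :: "nat \<Rightarrow> nat \<Rightarrow> real" where "pt s k = coeff (gR s) k"
definition w :: "nat \<Rightarrow> nat \<Rightarrow> nat \<Rightarrow> real" where "w s k i = coeff (qk s k) (s - Suc i)"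
definition Bb :: "nat \<Rightarrow> nat \<Rightarrow> real mat" where
  "Bb n s = mat s s (\<lambda>(i, j). (\<Sum>k<s. w s k i * w s k j)
      - real (s - i) * real (s - j) / real n * pt s (s - i) * pt s (s - j))"

lemma degree_gR: "degree (gR s) \<le> s"
proof -
  have "degree (gR s) \<le> sum (degree \<circ> lin) {..<s}"
    unfolding gR_def by (rule degree_prod_sum_le) simp
  also have "\<dots> = s" by (simp add: lin_def)
  finally show ?thesis .
qed

lemma gen_map: "map_poly (ev (pt s)) (gen_poly s) = gR s"
proof (rule poly_eqI)
  fix i
  interpret idom_hom "ev (pt s)" by (rule ev_hom)
  have c: "coeff (gen_poly s) i = (if i \<le> s then Var i else 0)"
    unfolding gen_poly_def coeff_sum coeff_monom by (simp add: sum.delta)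
  show "coeff (map_poly (ev (pt s)) (gen_poly s)) i = coeff (gR s) i"
    using degree_gR[of s] by (auto simp: c pt_def coeff_eq_0)
qed

lemma pderiv_map: "map_poly (ev (pt s)) (pderiv (gen_poly s)) = pderiv (gR s)"
proof -
  interpret idom_hom "ev (pt s)" by (rule ev_hom)
  show ?thesis by (simp add: map_poly_pderiv gen_map)
qed

lemma bez_map: "map_poly (map_poly (ev (pt s))) (bez_quot (gen_poly s) (pderiv (gen_poly s))) = Qs s"
proof -
  interpret idom_hom "ev (pt s)" by (rule ev_hom)
  have "comm_ring_hom (ev (pt s))" ..
  from bez_quot_map[OF this] show ?thesis by (simp add: gen_map pderiv_map bez_quot_gR)
qed

lemma Bbar_map: "map_mat (ev (pt s)) (Bbar n s) = Bb n s"
proof (rule eq_matI)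
  interpret idom_hom "ev (pt s)" by (rule ev_hom)
  fix i j assume ij: "i < dim_row (Bb n s)" "j < dim_col (Bb n s)"
  hence ij': "i < s" "j < s" by (auto simp: Bb_def)
  have "ev (pt s) (coeff (coeff (bez_quot (gen_poly s) (pderiv (gen_poly s))) a) b)
      = coeff (coeff (Qs s) a) b" for a b
    by (simp add: coeff_map_poly flip: bez_map)
  then show "map_mat (ev (pt s)) (Bbar n s) $$ (i, j) = Bb n s $$ (i, j)"
    using ij' by (simp add: Bbar_def Bb_def bezoutian_def hom_minus hom_mult coeff_Qs w_def)
qed (auto simp: Bb_def Bbar_def)

lemma wsum: "i < s \<Longrightarrow> real (s - i) * pt s (s - i) = (\<Sum>k<s. w s k i)"
proof -
  assume i: "i < s"
  have "coeff (pderiv (gR s)) (s - Suc i) = (\<Sum>k<s. w s k i)"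
    unfolding pderiv_gR coeff_sum w_def ..
  moreover have "coeff (pderiv (gR s)) (s - Suc i) = real (s - i) * pt s (s - i)"
    unfolding coeff_pderiv pt_def using i by (simp add: Suc_diff_Suc)
  ultimately show ?thesis by simp
qed



lemma cs_ineq:
  fixes y :: "nat \<Rightarrow> real"
  assumes "finite A"
  shows "(\<Sum>k\<in>A. y k)\<^sup>2 \<le> real (card A) * (\<Sum>k\<in>A. (y k)\<^sup>2)"
proof -
  have "0 \<le> (\<Sum>k\<in>A. \<Sum>l\<in>A. (y k - y l)\<^sup>2)" by (intro sum_nonneg) auto
  also have "\<dots> = (\<Sum>k\<in>A. \<Sum>l\<in>A. (y k)\<^sup>2 + (y l)\<^sup>2 - 2 * (y k * y l))"
    by (simp add: power2_diff mult.assoc)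
  also have "\<dots> = (\<Sum>k\<in>A. \<Sum>l\<in>A. (y k)\<^sup>2) + (\<Sum>k\<in>A. \<Sum>l\<in>A. (y l)\<^sup>2) - 2 * (\<Sum>k\<in>A. \<Sum>l\<in>A. y k * y l)"
    by (simp add: sum.distrib sum_subtractf sum_distrib_left)
  also have "(\<Sum>k\<in>A. \<Sum>l\<in>A. y k * y l) = (\<Sum>k\<in>A. y k)\<^sup>2"
    by (simp add: power2_eq_square sum_product)
  also have "(\<Sum>k\<in>A. \<Sum>l\<in>A. (y k)\<^sup>2) = real (card A) * (\<Sum>k\<in>A. (y k)\<^sup>2)"
    by (simp add: sum_distrib_left)
  also have "(\<Sum>k\<in>A. \<Sum>l\<in>A. (y l)\<^sup>2) = real (card A) * (\<Sum>k\<in>A. (y k)\<^sup>2)"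
    by simp
  finally show ?thesis by simp
qed

definition L :: "nat \<Rightarrow> (nat \<Rightarrow> real) \<Rightarrow> real poly \<Rightarrow> real" where
  "L s a f = (\<Sum>i<s. a i * coeff f (s - Suc i))"

lemma L_add: "L s a (f + g) = L s a f + L s a g"
  by (simp add: L_def algebra_simps sum.distrib)
lemma L_smult: "L s a (Polynomial.smult c f) = c * L s a f"
  by (simp add: L_def sum_distrib_left mult_ac)
lemma L_zero: "L s a 0 = 0" by (simp add: L_def)
lemma L_sum: "L s a (sum f A) = (\<Sum>x\<in>A. L s a (f x))"
  by (induction A rule: infinite_finite_induct) (auto simp: L_add L_zero)

lemma degree_qk: "k < s \<Longrightarrow> degree (qk s k) < s"
proof -
  assume k: "k < s"
  hence s: "0 < s" by simp
  have "degree (qk s k) \<le> sum (degree \<circ> lin) ({..<s}-{k})"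
    unfolding qk_def by (rule degree_prod_sum_le) simp
  also have "\<dots> = card ({..<s}-{k})" by (simp add: lin_def)
  also have "\<dots> < s"
    using k by (simp add: card_Diff_singleton)
  finally show ?thesis .
qed

lemma poly_qk_other: "j < s \<Longrightarrow> k \<noteq> j \<Longrightarrow> poly (qk s k) (real j) = 0"
  unfolding qk_def poly_prod by (rule prod_zero) (auto simp: lin_def intro!: bexI[of _ j])

lemma poly_qk_self: "poly (qk s k) (real k) \<noteq> 0"
  unfolding qk_def poly_prod by (auto simp: lin_def)

lemma interp:
  fixes f :: "real poly"
  assumes s: "0 < s" and df: "degree f < s"
  shows "f = (\<Sum>k<s. Polynomial.smult (poly f (real k) / poly (qk s k) (real k)) (qk s k))"
proof (rule ccontr)
  define D where "D = f - (\<Sum>k<s. Polynomial.smult (poly f (real k) / poly (qk s k) (real k)) (qk s k))"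
  assume "\<not> ?thesis"
  hence D0: "D \<noteq> 0" by (simp add: D_def)
  have dD: "degree D < s"
    unfolding D_def using df degree_qk
    by (intro degree_diff_less degree_sum_less) (auto intro: le_less_trans[OF degree_smult_le] s)
  have roots: "poly D (real j) = 0" if j: "j < s" for j
  proof -
    have "(\<Sum>k<s. poly f (real k) / poly (qk s k) (real k) * poly (qk s k) (real j))
        = (\<Sum>k\<in>{j}. poly f (real k) / poly (qk s k) (real k) * poly (qk s k) (real j))"
      by (rule sum.mono_neutral_right) (use j poly_qk_other in auto)
    also have "\<dots> = poly f (real j) / poly (qk s j) (real j) * poly (qk s j) (real j)" by simp
    also have "\<dots> = poly f (real j)" using poly_qk_self[of s j] by simp
    finally show ?thesis by (simp add: D_def poly_sum)
  qed
  have "real ` {..<s} \<subseteq> {x. poly D x = 0}" using roots by auto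
  hence "card (real ` {..<s}) \<le> card {x. poly D x = 0}"
    by (intro card_mono poly_roots_finite D0)
  also have "\<dots> \<le> degree D" by (rule card_poly_roots_bound[OF D0])
  finally have "s \<le> degree D" by (simp add: card_image inj_on_def)
  with dD show False by simp
qed

lemma y_nonzero:
  assumes s: "0 < s" and i0: "i0 < s" and a: "a i0 \<noteq> 0"
  shows "\<exists>k<s. L s a (qk s k) \<noteq> 0"
proof (rule ccontr)
  assume "\<not> ?thesis"
  hence y0: "\<And>k. k < s \<Longrightarrow> L s a (qk s k) = 0" by auto
  define f :: "real poly" where "f = monom 1 (s - Suc i0)"
  have df: "degree f < s" using i0 s by (simp add: f_def degree_monom_eq)
  have "L s a f = (\<Sum>k<s. L s a (Polynomial.smult (poly f (real k) / poly (qk s k) (real k)) (qk s k)))"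
    by (subst interp[OF s df]) (simp add: L_sum)
  also have "\<dots> = 0" by (simp add: L_smult y0)
  finally have L0: "L s a f = 0" .
  have "L s a f = (\<Sum>i<s. if i = i0 then a i else 0)"
    unfolding L_def f_def coeff_monom using i0
    by (intro sum.cong) auto
  also have "\<dots> = a i0" using i0 by simp
  finally show False using L0 a by simp
qed

definition QF :: "nat \<Rightarrow> nat \<Rightarrow> (nat \<Rightarrow> real) \<Rightarrow> real" where
  "QF n s a = (\<Sum>i<s. \<Sum>j<s. a i * a j * Bb n s $$ (i, j))"

lemma QF_eq:
  "QF n s a = (\<Sum>k<s. (L s a (qk s k))\<^sup>2) - (\<Sum>k<s. L s a (qk s k))\<^sup>2 / real n"
proof -
  define V where "V i = (\<Sum>k<s. w s k i)" for i
  have entry: "Bb n s $$ (i, j) = (\<Sum>k<s. w s k i * w s k j) - V i * V j / real n"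
    if "i < s" "j < s" for i j
  proof -
    have aux: "x*y/nn*p*q = (x*p)*(y*q)/(nn::real)" for x y nn p q by simp
    have e1: "real (s - i) * pt s (s - i) = V i" using wsum[OF that(1)] V_def by simp
    have e2: "real (s - j) * pt s (s - j) = V j" using wsum[OF that(2)] V_def by simp
    have "Bb n s $$ (i, j) = (\<Sum>k<s. w s k i * w s k j) - real (s - i) * real (s - j) / real n * pt s (s - i) * pt s (s - j)"
      using that unfolding Bb_def by simp
    also have "\<dots> = (\<Sum>k<s. w s k i * w s k j) - V i * V j / real n"
      unfolding aux e1 e2 ..
    finally show ?thesis .
  qed
  have y: "L s a (qk s k) = (\<Sum>i<s. a i * w s k i)" for k by (simp add: L_def w_def)
  have "QF n s a = (\<Sum>i<s. \<Sum>j<s. (\<Sum>k<s. (a i * w s k i) * (a j * w s k j)) - (a i * V i) * (a j * V j) / real n)"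
    unfolding QF_def
    by (intro sum.cong refl) (simp add: entry right_diff_distrib sum_distrib_left mult_ac)
  also have "\<dots> = (\<Sum>i<s. \<Sum>j<s. \<Sum>k<s. (a i * w s k i) * (a j * w s k j)) - (\<Sum>i<s. \<Sum>j<s. (a i * V i) * (a j * V j)) / real n"
    by (simp add: sum_subtractf sum_divide_distrib)
  also have "(\<Sum>i<s. \<Sum>j<s. \<Sum>k<s. (a i * w s k i) * (a j * w s k j)) = (\<Sum>k<s. (\<Sum>i<s. a i * w s k i) * (\<Sum>j<s. a j * w s k j))"
  proof -
    have "(\<Sum>i<s. \<Sum>j<s. \<Sum>k<s. (a i * w s k i) * (a j * w s k j)) = (\<Sum>i<s. \<Sum>k<s. \<Sum>j<s. (a i * w s k i) * (a j * w s k j))"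
      by (intro sum.cong refl sum.swap)
    also have "\<dots> = (\<Sum>k<s. \<Sum>i<s. \<Sum>j<s. (a i * w s k i) * (a j * w s k j))"
      by (rule sum.swap)
    also have "\<dots> = (\<Sum>k<s. (\<Sum>i<s. a i * w s k i) * (\<Sum>j<s. a j * w s k j))"
      by (simp only: sum_product)
    finally show ?thesis .
  qed
  also have "(\<Sum>i<s. \<Sum>j<s. (a i * V i) * (a j * V j)) = (\<Sum>i<s. a i * V i)\<^sup>2"
    by (simp add: power2_eq_square sum_product)
  also have "(\<Sum>i<s. a i * V i) = (\<Sum>k<s. \<Sum>i<s. a i * w s k i)"
  proof -
    have "(\<Sum>i<s. a i * V i) = (\<Sum>i<s. \<Sum>k<s. a i * w s k i)"
      by (simp add: V_def sum_distrib_left)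
    also have "\<dots> = (\<Sum>k<s. \<Sum>i<s. a i * w s k i)" by (rule sum.swap)
    finally show ?thesis .
  qed
  finally show ?thesis by (simp add: y power2_eq_square)
qed

lemma QF_nonneg: "s < n \<Longrightarrow> 0 \<le> QF n s a"
proof -
  assume sn: "s < n"
  let ?S2 = "\<Sum>k<s. (L s a (qk s k))\<^sup>2"
  have "(\<Sum>k<s. L s a (qk s k))\<^sup>2 \<le> real s * ?S2" using cs_ineq[of "{..<s}"] by simp
  also have "\<dots> \<le> real n * ?S2" using sn by (intro mult_right_mono) (auto intro: sum_nonneg)
  finally have "(\<Sum>k<s. L s a (qk s k))\<^sup>2 / real n \<le> ?S2" using sn by (simp add: divide_le_eq mult.commute)
  thus ?thesis by (simp add: QF_eq)
qed

lemma QF_pos: assumes sn: "s < n" and i0: "i0 < s" and a: "a i0 \<noteq> 0" shows "0 < QF n s a"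
proof -
  have s: "0 < s" using i0 by simp
  obtain k where k: "k < s" "L s a (qk s k) \<noteq> 0" using y_nonzero[of s i0 a, OF s i0 a] by blast
  let ?S2 = "\<Sum>k<s. (L s a (qk s k))\<^sup>2"
  have S2: "0 < ?S2"
    by (rule sum_pos2[of _ k]) (use k in auto)
  have "(\<Sum>k<s. L s a (qk s k))\<^sup>2 \<le> real s * ?S2" using cs_ineq[of "{..<s}"] by simp
  also have "\<dots> < real n * ?S2" using sn S2 by (intro mult_strict_right_mono) auto
  finally have "(\<Sum>k<s. L s a (qk s k))\<^sup>2 / real n < ?S2" using sn by (simp add: divide_less_eq mult.commute)
  thus ?thesis by (simp add: QF_eq)
qed



lemma Bb_carrier: "Bb n s \<in> carrier_mat s s" by (simp add: Bb_def)

lemma Bb_sym: "i < s \<Longrightarrow> j < s \<Longrightarrow> Bb n s $$ (i, j) = Bb n s $$ (j, i)"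
  by (simp add: Bb_def mult_ac)

lemma QF_sym_swap:
  fixes B :: "nat \<Rightarrow> nat \<Rightarrow> real"
  assumes "\<And>i j. i < s \<Longrightarrow> j < s \<Longrightarrow> B i j = B j i"
  shows "(\<Sum>i<s. \<Sum>j<s. B i j * (b i * a j)) = (\<Sum>i<s. \<Sum>j<s. B i j * (a i * b j))"
proof -
  have "(\<Sum>i<s. \<Sum>j<s. B i j * (b i * a j)) = (\<Sum>j<s. \<Sum>i<s. B i j * (b i * a j))"
    by (rule sum.swap)
  also have "\<dots> = (\<Sum>j<s. \<Sum>i<s. B j i * (a j * b i))"
    using assms by (intro sum.cong refl) (simp add: mult_ac)
  finally show ?thesis .
qed

lemma eig_pos:
  assumes sn: "s < n" and ev: "eigenvalue (map_mat complex_of_real (Bb n s)) lam"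
  shows "\<exists>r>0. lam = complex_of_real r"
proof -
  let ?A = "map_mat complex_of_real (Bb n s)"
  let ?B = "\<lambda>i j. Bb n s $$ (i, j)"
  obtain v where v: "v \<in> carrier_vec s" "v \<noteq> 0\<^sub>v s" "?A *\<^sub>v v = lam \<cdot>\<^sub>v v"
    using ev unfolding eigenvalue_def eigenvector_def by (auto simp: Bb_def)
  have dv: "dim_vec v = s" using v(1) by simp
  define a where "a i = Re (v $ i)" for i
  define b where "b i = Im (v $ i)" for i
  obtain i0 where i0: "i0 < s" "v $ i0 \<noteq> 0"
    using v(1,2) by (metis carrier_vecD eq_vecI index_zero_vec(1) index_zero_vec(2))
  have ab: "a i0 \<noteq> 0 \<or> b i0 \<noteq> 0" using i0(2) by (auto simp: a_def b_def complex_eq_iff)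
  have Av: "(?A *\<^sub>v v) $ i = (\<Sum>j<s. complex_of_real (?B i j) * v $ j)" if "i < s" for i
    using that dv by (simp add: scalar_prod_def Bb_def atLeast0LessThan)
  define S where "S = (\<Sum>i<s. cnj (v $ i) * (?A *\<^sub>v v) $ i)"
  have S1: "S = (\<Sum>i<s. \<Sum>j<s. cnj (v $ i) * complex_of_real (?B i j) * v $ j)"
    unfolding S_def by (intro sum.cong refl) (simp add: Av sum_distrib_left mult_ac)
  have ReS: "Re S = QF n s a + QF n s b"
    unfolding S1 QF_def Re_sum
    by (simp add: a_def b_def sum.distrib[symmetric] algebra_simps)
  have ImS: "Im S = 0"
  proof -
    have "Im S = (\<Sum>i<s. \<Sum>j<s. ?B i j * (a i * b j)) - (\<Sum>i<s. \<Sum>j<s. ?B i j * (b i * a j))"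
      unfolding S1 Im_sum
      by (simp add: a_def b_def sum_subtractf[symmetric] algebra_simps)
    also have "\<dots> = 0" using QF_sym_swap[of s ?B b a] Bb_sym by simp
    finally show ?thesis .
  qed
  have S_real: "S = complex_of_real (QF n s a + QF n s b)"
    using ReS ImS by (simp add: complex_eq_iff)
  define N where "N = (\<Sum>i<s. (a i)\<^sup>2 + (b i)\<^sup>2)"
  have "S = (\<Sum>i<s. lam * (cnj (v $ i) * v $ i))"
    unfolding S_def v(3) using dv by (intro sum.cong refl) (simp add: mult_ac)
  also have "\<dots> = lam * complex_of_real N"
    unfolding N_def sum_distrib_left[symmetric] of_real_sum
    by (intro arg_cong[where f="\<lambda>x. lam * x"] sum.cong refl)
       (simp add: a_def b_def complex_eq_iff power2_eq_square)
  finally have eq: "lam * complex_of_real N = complex_of_real (QF n s a + QF n s b)"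
    using S_real by simp
  have Npos: "0 < N"
    unfolding N_def by (rule sum_pos2[of _ i0]) (use i0 ab in \<open>auto simp: sum_power2_gt_zero_iff\<close>)
  have Qpos: "0 < QF n s a + QF n s b"
    using ab QF_pos[OF sn i0(1), of a] QF_pos[OF sn i0(1), of b] QF_nonneg[OF sn, of a] QF_nonneg[OF sn, of b]
    by auto
  have "lam = complex_of_real ((QF n s a + QF n s b) / N)"
    using eq Npos by (simp add: field_simps)
  thus ?thesis using Npos Qpos by (intro exI[of _ "(QF n s a + QF n s b) / N"]) auto
qed



lemma coeff_lin_mult: "coeff ([:-r, 1:] * p) j = - r * coeff p j + (case j of 0 \<Rightarrow> 0 | Suc j' \<Rightarrow> coeff p j')" for r :: real
  by (cases j) (simp_all add: coeff_pCons)

lemma sign_prod: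
  fixes rs :: "real list"
  assumes "\<forall>r\<in>set rs. 0 < r"
  shows "(\<forall>j\<le>length rs. 0 < (-1)^(length rs - j) * coeff (\<Prod>r\<leftarrow>rs. [:-r, 1:]) j)
       \<and> (\<forall>j>length rs. coeff (\<Prod>r\<leftarrow>rs. [:-r, 1:]) j = 0)"
  using assms
proof (induction rs)
  case Nil
  show ?case by (auto simp: coeff_pCons split: nat.split)
next
  case (Cons r rs)
  let ?P = "\<Prod>r\<leftarrow>rs. [:-r, 1:]"
  let ?m = "length rs"
  have r: "0 < r" using Cons.prems by simp
  from Cons.IH Cons.prems have pos: "\<And>j. j \<le> ?m \<Longrightarrow> 0 < (-1)^(?m - j) * coeff ?P j"
    and zero: "\<And>j. j > ?m \<Longrightarrow> coeff ?P j = 0" by auto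
  have prodeq: "(\<Prod>x\<leftarrow>r # rs. [:-x, 1:]) = [:-r, 1:] * ?P" by simp
  show ?case
  proof (intro conjI allI impI)
    fix j assume j: "j \<le> length (r # rs)"
    show "0 < (-1)^(length (r # rs) - j) * coeff (\<Prod>x\<leftarrow>r # rs. [:-x, 1:]) j"
    proof (cases j)
      case 0
      have "(-1)^(length (r # rs) - j) * coeff (\<Prod>x\<leftarrow>r # rs. [:-x, 1:]) j
          = r * ((-1)^?m * coeff ?P 0)"
        unfolding prodeq coeff_lin_mult using 0 by simp
      also have "\<dots> > 0" using pos[of 0] r by simp
      finally show ?thesis .
    next
      case (Suc j')
      have jm: "j' \<le> ?m" using j Suc by simp
      have e: "(-1)^(length (r # rs) - j) * coeff (\<Prod>x\<leftarrow>r # rs. [:-x, 1:]) j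
          = r * (- ((-1)^(?m - j') * coeff ?P j)) + (-1)^(?m - j') * coeff ?P j'"
        unfolding prodeq coeff_lin_mult using Suc by (simp add: algebra_simps)
      show ?thesis
      proof (cases "j \<le> ?m")
        case True
        have "?m - j' = Suc (?m - j)" using True Suc by simp
        hence "- ((-1)^(?m - j') * coeff ?P j) = (-1)^(?m - j) * coeff ?P j" by simp
        hence "r * (- ((-1)^(?m - j') * coeff ?P j)) > 0" using pos[OF True] r by simp
        thus ?thesis unfolding e using pos[OF jm] by simp
      next
        case False
        hence "coeff ?P j = 0" by (intro zero) simp
        thus ?thesis unfolding e using pos[OF jm] by simp
      qed
    qed
  next
    fix j assume j: "length (r # rs) < j"
    then obtain j' where j': "j = Suc j'" "j' > ?m" by (cases j) auto
    show "coeff (\<Prod>x\<leftarrow>r # rs. [:-x, 1:]) j = 0"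
      unfolding prodeq coeff_lin_mult using j' zero[of j] zero[of j'] by simp
  qed
qed

lemma charpoly_Bb_nonzero:
  assumes sn: "s < n" and j: "j \<le> s"
  shows "coeff (char_poly (Bb n s)) j \<noteq> 0"
proof -
  let ?A = "map_mat complex_of_real (Bb n s)"
  have A: "?A \<in> carrier_mat s s" using Bb_carrier by simp
  have cA: "char_poly ?A = map_poly complex_of_real (char_poly (Bb n s))"
    by (rule of_real_hom.char_poly_hom[OF Bb_carrier])
  obtain as where as: "char_poly ?A = (\<Prod>a\<leftarrow>as. [:- a, 1:])" "length as = s"
    using char_poly_factorized[OF A] by blast
  have real: "\<exists>r>0. a = complex_of_real r" if a: "a \<in> set as" for a
  proof -
    have "poly (char_poly ?A) a = 0"
      unfolding as(1) poly_prod_list using a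
      by (induction as) auto
    hence "eigenvalue ?A a" using eigenvalue_root_char_poly[OF A] by simp
    thus ?thesis by (rule eig_pos[OF sn])
  qed
  define rs where "rs = map Re as"
  have asrs: "as = map complex_of_real rs"
    unfolding rs_def using real by (induction as) (auto simp: complex_eq_iff)
  have rpos: "\<forall>r\<in>set rs. 0 < r" unfolding rs_def using real by fastforce
  have "map_poly complex_of_real (char_poly (Bb n s)) = map_poly complex_of_real (\<Prod>r\<leftarrow>rs. [:-r, 1:])"
  proof -
    interpret m: map_poly_comm_ring_hom "complex_of_real" ..
    have "map_poly complex_of_real (\<Prod>r\<leftarrow>rs. [:-r, 1:]) = (\<Prod>x\<leftarrow>rs. [:- complex_of_real x, 1:])"
    proof -
      have lm: "map_poly complex_of_real [:-r,1:] = [:-complex_of_real r, 1:]" for r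
        by (simp add: of_real_hom.map_poly_pCons_hom)
      show ?thesis
        by (induction rs) (simp_all only: list.map prod_list.Cons prod_list.Nil m.hom_mult m.hom_one lm)
    qed
    thus ?thesis unfolding cA[symmetric] as(1) asrs by (simp add: o_def)
  qed
  hence cB: "char_poly (Bb n s) = (\<Prod>r\<leftarrow>rs. [:-r, 1:])"
  proof -
    assume h: "map_poly complex_of_real (char_poly (Bb n s)) = map_poly complex_of_real (\<Prod>r\<leftarrow>rs. [:-r, 1:])"
    show ?thesis
    proof (rule poly_eqI)
      fix i
      from arg_cong[OF h, of "\<lambda>p. coeff p i"]
      show "coeff (char_poly (Bb n s)) i = coeff (\<Prod>r\<leftarrow>rs. [:-r, 1:]) i"
        by (simp add: coeff_map_poly)
    qed
  qed
  have "length rs = s" using as(2) by (simp add: rs_def)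
  with sign_prod[OF rpos] j have "0 < (-1)^(s - j) * coeff (char_poly (Bb n s)) j"
    unfolding cB by auto
  thus ?thesis by auto
qed



theorem lemma5p3:
  fixes n s :: nat
  assumes "1 \<le> s" and "s < n"
  shows "\<forall>k\<in>{1..s}. coeff (char_poly (Bbar n s)) (s - k) \<noteq> 0"
proof
  fix k assume k: "k \<in> {1..s}"
  interpret idom_hom "ev (pt s)" by (rule ev_hom)
  have car: "Bbar n s \<in> carrier_mat s s" by (simp add: Bbar_def)
  have "char_poly (Bb n s) = map_poly (ev (pt s)) (char_poly (Bbar n s))"
    using char_poly_hom[OF car] Bbar_map by simp
  hence "coeff (char_poly (Bb n s)) (s - k) = ev (pt s) (coeff (char_poly (Bbar n s)) (s - k))"
    by (simp add: coeff_map_poly)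
  moreover have "coeff (char_poly (Bb n s)) (s - k) \<noteq> 0"
    by (rule charpoly_Bb_nonzero) (use assms in auto)
  ultimately show "coeff (char_poly (Bbar n s)) (s - k) \<noteq> 0" by auto
qed


end
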